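(* Every tree (in which every nontrivial pseudo-supremum is a supremum) that is normal in the interval topology is countably paracompact.
   Context: A tree is a partially ordered set in which the set of predecessors of each element is well-ordered. For a nonempty chain bounded above, its pseudo-supremum is the set of its minimal upper bounds; standing assumption: each such set is a singleton. The interval topology has as base all sets $(s,t]=\{x:s<x\le t\}$ together with all singletons $\{t\}$ with $t$ minimal. A space is countably paracompact if every countable open cover has a locally finite open refinement. *)

theory Defs
  imports "HOL-Analysis.Analysis"
begin

definition poset_on :: "'a set \<Rightarrow> ('a \<Rightarrow> 'a \<Rightarrow> bool) \<Rightarrow> bool" where
  "poset_on T le \<longleftrightarrow>
     (\<forall>x\<in>T. le x x) \<and>
     (\<forall>x\<in>T. \<forall>y\<in>T. le x y \<and> le y x \<longrightarrow> x = y) \<and>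
     (\<forall>x\<in>T. \<forall>y\<in>T. \<forall>z\<in>T. le x y \<and> le y z \<longrightarrow> le x z)"

definition strict :: "('a \<Rightarrow> 'a \<Rightarrow> bool) \<Rightarrow> 'a \<Rightarrow> 'a \<Rightarrow> bool" where
  "strict le x y \<longleftrightarrow> le x y \<and> x \<noteq> y"

definition well_ordered_subset :: "'a set \<Rightarrow> ('a \<Rightarrow> 'a \<Rightarrow> bool) \<Rightarrow> bool" where
  "well_ordered_subset A le \<longleftrightarrow>
     (\<forall>x\<in>A. \<forall>y\<in>A. le x y \<or> le y x) \<and>
     (\<forall>B. B \<subseteq> A \<and> B \<noteq> {} \<longrightarrow> (\<exists>m\<in>B. \<forall>b\<in>B. le m b))"

definition is_tree :: "'a set \<Rightarrow> ('a \<Rightarrow> 'a \<Rightarrow> bool) \<Rightarrow> bool" where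
  "is_tree T le \<longleftrightarrow> poset_on T le \<and>
     (\<forall>t\<in>T. well_ordered_subset {s\<in>T. strict le s t} le)"

definition is_chain :: "'a set \<Rightarrow> ('a \<Rightarrow> 'a \<Rightarrow> bool) \<Rightarrow> 'a set \<Rightarrow> bool" where
  "is_chain T le C \<longleftrightarrow> C \<subseteq> T \<and> (\<forall>x\<in>C. \<forall>y\<in>C. le x y \<or> le y x)"

definition upper_bound :: "'a set \<Rightarrow> ('a \<Rightarrow> 'a \<Rightarrow> bool) \<Rightarrow> 'a set \<Rightarrow> 'a \<Rightarrow> bool" where
  "upper_bound T le C x \<longleftrightarrow> x \<in> T \<and> (\<forall>c\<in>C. le c x)"

definition pseudo_sup :: "'a set \<Rightarrow> ('a \<Rightarrow> 'a \<Rightarrow> bool) \<Rightarrow> 'a set \<Rightarrow> 'a set" where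
  "pseudo_sup T le C =
     {x. upper_bound T le C x \<and> (\<forall>y. upper_bound T le C y \<and> le y x \<longrightarrow> y = x)}"

definition pseudo_sups_are_sups :: "'a set \<Rightarrow> ('a \<Rightarrow> 'a \<Rightarrow> bool) \<Rightarrow> bool" where
  "pseudo_sups_are_sups T le \<longleftrightarrow>
     (\<forall>C. is_chain T le C \<and> C \<noteq> {} \<and> (\<exists>x. upper_bound T le C x) \<longrightarrow>
        (\<exists>s. pseudo_sup T le C = {s}))"

definition minimal_in :: "'a set \<Rightarrow> ('a \<Rightarrow> 'a \<Rightarrow> bool) \<Rightarrow> 'a \<Rightarrow> bool" where
  "minimal_in T le t \<longleftrightarrow> t \<in> T \<and> (\<forall>s\<in>T. le s t \<longrightarrow> s = t)"

definition interval_topology :: "'a set \<Rightarrow> ('a \<Rightarrow> 'a \<Rightarrow> bool) \<Rightarrow> 'a topology" where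
  "interval_topology T le = topology_generated_by
     ({{x\<in>T. strict le s x \<and> le x t} | s t. s \<in> T \<and> t \<in> T} \<union>
      {{t} | t. minimal_in T le t})"

definition countably_paracompact :: "'a topology \<Rightarrow> bool" where
  "countably_paracompact X \<longleftrightarrow>
     (\<forall>\<U>. countable \<U> \<and> (\<forall>U\<in>\<U>. openin X U) \<and> \<Union>\<U> = topspace X \<longrightarrow>
        (\<exists>\<V>. (\<forall>V\<in>\<V>. openin X V) \<and> \<Union>\<V> = topspace X \<and>
             (\<forall>V\<in>\<V>. \<exists>U\<in>\<U>. V \<subseteq> U) \<and> locally_finite_in X \<V>))"

end

theory Submission
  imports Defs
begin


lemma tree_poset: "is_tree T le \<Longrightarrow> poset_on T le"
  by (simp add: is_tree_def)

lemma tree_refl: "is_tree T le \<Longrightarrow> x \<in> T \<Longrightarrow> le x x"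
proof -
  assume "is_tree T le" "x \<in> T"
  then have "poset_on T le" by (simp add: is_tree_def)
  then have "\<forall>x\<in>T. le x x" unfolding poset_on_def by (elim conjE)
  then show ?thesis using \<open>x \<in> T\<close> by blast
qed

lemma tree_antisym: "is_tree T le \<Longrightarrow> x \<in> T \<Longrightarrow> y \<in> T \<Longrightarrow> le x y \<Longrightarrow> le y x \<Longrightarrow> x = y"
proof -
  assume "is_tree T le" "x \<in> T" "y \<in> T" "le x y" "le y x"
  then have "poset_on T le" by (simp add: is_tree_def)
  then have "\<forall>x\<in>T. \<forall>y\<in>T. le x y \<and> le y x \<longrightarrow> x = y" unfolding poset_on_def by (elim conjE)
  then show ?thesis using \<open>x \<in> T\<close> \<open>y \<in> T\<close> \<open>le x y\<close> \<open>le y x\<close> by blast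
qed

lemma tree_trans: "is_tree T le \<Longrightarrow> x \<in> T \<Longrightarrow> y \<in> T \<Longrightarrow> z \<in> T \<Longrightarrow> le x y \<Longrightarrow> le y z \<Longrightarrow> le x z"
proof -
  assume "is_tree T le" "x \<in> T" "y \<in> T" "z \<in> T" "le x y" "le y z"
  then have "poset_on T le" by (simp add: is_tree_def)
  then have "\<forall>x\<in>T. \<forall>y\<in>T. \<forall>z\<in>T. le x y \<and> le y z \<longrightarrow> le x z" unfolding poset_on_def by (elim conjE)
  then show ?thesis using \<open>x \<in> T\<close> \<open>y \<in> T\<close> \<open>z \<in> T\<close> \<open>le x y\<close> \<open>le y z\<close> by blast
qed

lemma tree_chain: "is_tree T le \<Longrightarrow> x \<in> T \<Longrightarrow> a \<in> T \<Longrightarrow> b \<in> T \<Longrightarrow> strict le a x \<Longrightarrow> strict le b x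
   \<Longrightarrow> le a b \<or> le b a"
proof -
  assume tr: "is_tree T le" and x: "x \<in> T" and a: "a \<in> T" and b: "b \<in> T"
    and ax: "strict le a x" and bx: "strict le b x"
  have "well_ordered_subset {s\<in>T. strict le s x} le" using tr x by (simp add: is_tree_def)
  then have "\<forall>u\<in>{s\<in>T. strict le s x}. \<forall>v\<in>{s\<in>T. strict le s x}. le u v \<or> le v u"
    by (simp add: well_ordered_subset_def)
  then show ?thesis using a b ax bx by blast
qed

lemma strict_trans1: "is_tree T le \<Longrightarrow> x \<in> T \<Longrightarrow> y \<in> T \<Longrightarrow> z \<in> T \<Longrightarrow> le x y \<Longrightarrow> strict le y z \<Longrightarrow> strict le x z"
proof -
  assume tr: "is_tree T le" and x: "x \<in> T" and y: "y \<in> T" and z: "z \<in> T" and xy: "le x y" and yz: "strict le y z"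
  have l: "le y z" "y \<noteq> z" using yz by (auto simp: strict_def)
  have "le x z" using tree_trans[OF tr x y z xy l(1)] .
  moreover have "x \<noteq> z"
  proof
    assume "x = z"
    then have "y = z" using tree_antisym[OF tr y z l(1)] xy by simp
    then show False using l(2) by simp
  qed
  ultimately show ?thesis by (simp add: strict_def)
qed

lemma strict_trans2: "is_tree T le \<Longrightarrow> x \<in> T \<Longrightarrow> y \<in> T \<Longrightarrow> z \<in> T \<Longrightarrow> strict le x y \<Longrightarrow> le y z \<Longrightarrow> strict le x z"
proof -
  assume tr: "is_tree T le" and x: "x \<in> T" and y: "y \<in> T" and z: "z \<in> T" and xy: "strict le x y" and yz: "le y z"
  have l: "le x y" "x \<noteq> y" using xy by (auto simp: strict_def)
  have "le x z" using tree_trans[OF tr x y z l(1) yz] .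
  moreover have "x \<noteq> z"
  proof
    assume "x = z"
    then have "x = y" using tree_antisym[OF tr x y l(1)] yz by simp
    then show False using l(2) by simp
  qed
  ultimately show ?thesis by (simp add: strict_def)
qed

lemma not_minimal: "x \<in> T \<Longrightarrow> \<not> minimal_in T le x \<Longrightarrow> \<exists>s\<in>T. strict le s x"
  unfolding minimal_in_def strict_def by blast

lemma topspace_it: assumes tr: "is_tree T le" shows "topspace (interval_topology T le) = T"
proof -
  let ?B1 = "{{x\<in>T. strict le s x \<and> le x t} | s t. s \<in> T \<and> t \<in> T}"
  let ?B2 = "{{t} | t. minimal_in T le t}"
  have "\<Union>(?B1 \<union> ?B2) = T"
  proof
    show "\<Union>(?B1 \<union> ?B2) \<subseteq> T"
    proof
      fix y assume "y \<in> \<Union>(?B1 \<union> ?B2)"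
      then obtain B where B: "B \<in> ?B1 \<union> ?B2" "y \<in> B" by (rule UnionE)
      from B(1) show "y \<in> T"
      proof (rule UnE)
        assume "B \<in> ?B1"
        then show ?thesis using B(2) by auto
      next
        assume "B \<in> ?B2"
        then show ?thesis using B(2) by (auto simp: minimal_in_def)
      qed
    qed
    show "T \<subseteq> \<Union>(?B1 \<union> ?B2)"
    proof
      fix x assume x: "x \<in> T"
      show "x \<in> \<Union>(?B1 \<union> ?B2)"
      proof (cases "minimal_in T le x")
        case True
        then have "{x} \<in> ?B2" by blast
        then show ?thesis by (rule UnionI[OF UnI2]) simp
      next
        case False
        obtain s where s: "s \<in> T" "strict le s x" using not_minimal[OF x False] by blast
        have m1: "x \<in> {w\<in>T. strict le s w \<and> le w x}" using s x tree_refl[OF tr x] by simp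
        have m2: "{w\<in>T. strict le s w \<and> le w x} \<in> ?B1"
          by (rule CollectI, rule exI[of _ s], rule exI[of _ x]) (simp add: s x)
        show ?thesis by (rule UnionI[OF UnI1[OF m2] m1])
      qed
    qed
  qed
  then show ?thesis unfolding interval_topology_def topology_generated_by_topspace .
qed

lemma open_ival: "s \<in> T \<Longrightarrow> t \<in> T \<Longrightarrow> openin (interval_topology T le) {x\<in>T. strict le s x \<and> le x t}"
  unfolding interval_topology_def
  by (rule topology_generated_by_Basis, rule UnI1, rule CollectI, rule exI[of _ s], rule exI[of _ t]) simp

lemma open_min: "minimal_in T le t \<Longrightarrow> openin (interval_topology T le) {t}"
  unfolding interval_topology_def
  by (rule topology_generated_by_Basis, rule UnI2) blast

lemma local_base_gen:
  assumes tr: "is_tree T le"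
  and g: "generate_topology_on
     ({{x\<in>T. strict le s x \<and> le x t} | s t. s \<in> T \<and> t \<in> T} \<union>
      {{t} | t. minimal_in T le t}) U"
  shows "\<forall>x\<in>U. x \<in> T \<longrightarrow> \<not> minimal_in T le x \<longrightarrow> (\<exists>s\<in>T. strict le s x \<and> {w\<in>T. strict le s w \<and> le w x} \<subseteq> U)"
  using g
proof induction
  case Empty
  then show ?case by simp
next
  case (Int a b)
  show ?case
  proof (intro ballI impI)
    fix x assume x: "x \<in> a \<inter> b" "x \<in> T" "\<not> minimal_in T le x"
    obtain s1 where s1: "s1 \<in> T" "strict le s1 x" "{w\<in>T. strict le s1 w \<and> le w x} \<subseteq> a"
      using Int x by blast
    obtain s2 where s2: "s2 \<in> T" "strict le s2 x" "{w\<in>T. strict le s2 w \<and> le w x} \<subseteq> b"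
      using Int x by blast
    have "le s1 s2 \<or> le s2 s1" using tree_chain[OF tr x(2) s1(1) s2(1) s1(2) s2(2)] .
    then show "\<exists>s\<in>T. strict le s x \<and> {w\<in>T. strict le s w \<and> le w x} \<subseteq> a \<inter> b"
    proof
      assume h: "le s1 s2"
      have "{w\<in>T. strict le s2 w \<and> le w x} \<subseteq> {w\<in>T. strict le s1 w \<and> le w x}"
        using strict_trans1[OF tr s1(1) s2(1) _ h] by blast
      then show ?thesis using s1 s2 by blast
    next
      assume h: "le s2 s1"
      have "{w\<in>T. strict le s1 w \<and> le w x} \<subseteq> {w\<in>T. strict le s2 w \<and> le w x}"
        using strict_trans1[OF tr s2(1) s1(1) _ h] by blast
      then show ?thesis using s1 s2 by blast
    qed
  qed
next
  case (UN K)
  then show ?case by blast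
next
  case (Basis s)
  show ?case
  proof (intro ballI impI)
    fix x assume x: "x \<in> s" "x \<in> T" "\<not> minimal_in T le x"
    from Basis show "\<exists>s'\<in>T. strict le s' x \<and> {w\<in>T. strict le s' w \<and> le w x} \<subseteq> s"
    proof
      assume "s \<in> {{x\<in>T. strict le s x \<and> le x t} | s t. s \<in> T \<and> t \<in> T}"
      then obtain a t where at: "a \<in> T" "t \<in> T" "s = {x\<in>T. strict le a x \<and> le x t}" by blast
      have "{w\<in>T. strict le a w \<and> le w x} \<subseteq> s"
      proof
        fix w assume w: "w \<in> {w\<in>T. strict le a w \<and> le w x}"
        have "le x t" using x at by blast
        then have "le w t" using tree_trans[OF tr, of w x t] w x at by blast
        then show "w \<in> s" using w at by blast
      qed
      then show ?thesis using at x by blast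
    next
      assume "s \<in> {{t} | t. minimal_in T le t}"
      then show ?thesis using x by blast
    qed
  qed
qed

lemma local_base:
  assumes tr: "is_tree T le" and U: "openin (interval_topology T le) U" and x: "x \<in> U"
    and nm: "\<not> minimal_in T le x"
  shows "\<exists>s\<in>T. strict le s x \<and> {w\<in>T. strict le s w \<and> le w x} \<subseteq> U"
proof -
  have xT: "x \<in> T" using openin_subset[OF U] x topspace_it[OF tr] by blast
  have "generate_topology_on
     ({{x\<in>T. strict le s x \<and> le x t} | s t. s \<in> T \<and> t \<in> T} \<union>
      {{t} | t. minimal_in T le t}) U"
    using U unfolding interval_topology_def by (rule openin_topology_generated_by)
  from local_base_gen[OF tr this] x xT nm show ?thesis by blast
qed



lemma down_open:
  assumes tr: "is_tree T le" and D: "D \<subseteq> T" and dc: "\<And>x z. x \<in> D \<Longrightarrow> z \<in> T \<Longrightarrow> le z x \<Longrightarrow> z \<in> D"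
  shows "openin (interval_topology T le) D"
proof (subst openin_subopen, intro ballI)
  fix x assume x: "x \<in> D"
  have xT: "x \<in> T" using x D by blast
  show "\<exists>U. openin (interval_topology T le) U \<and> x \<in> U \<and> U \<subseteq> D"
  proof (cases "minimal_in T le x")
    case True
    then show ?thesis using open_min[OF True] x by blast
  next
    case False
    obtain s where s: "s \<in> T" "strict le s x" using not_minimal[OF xT False] by blast
    have o: "openin (interval_topology T le) {w\<in>T. strict le s w \<and> le w x}" using open_ival[OF s(1) xT] .
    have i: "x \<in> {w\<in>T. strict le s w \<and> le w x}" using s xT tree_refl[OF tr xT] by simp
    have su: "{w\<in>T. strict le s w \<and> le w x} \<subseteq> D" using dc[OF x] by blast
    show ?thesis using o i su by blast
  qed
qed

lemma antichain_closed:
  assumes tr: "is_tree T le" and A: "A \<subseteq> T" and ac: "\<And>a b. a \<in> A \<Longrightarrow> b \<in> A \<Longrightarrow> le a b \<Longrightarrow> a = b"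
  shows "closedin (interval_topology T le) A"
proof -
  have "openin (interval_topology T le) (T - A)"
  proof (subst openin_subopen, intro ballI)
    fix z assume z: "z \<in> T - A"
    have zT: "z \<in> T" using z by blast
    show "\<exists>U. openin (interval_topology T le) U \<and> z \<in> U \<and> U \<subseteq> T - A"
    proof (cases "minimal_in T le z")
      case True
      then show ?thesis using open_min[OF True] z by blast
    next
      case False
      show ?thesis
      proof (cases "\<exists>a\<in>A. strict le a z")
        case True
        then obtain a where a: "a \<in> A" "strict le a z" by blast
        have aT: "a \<in> T" using a A by blast
        have o: "openin (interval_topology T le) {w\<in>T. strict le a w \<and> le w z}" using open_ival[OF aT zT] .
        have i: "z \<in> {w\<in>T. strict le a w \<and> le w z}" using a zT tree_refl[OF tr zT] by simp
        have su: "{w\<in>T. strict le a w \<and> le w z} \<subseteq> T - A"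
        proof
          fix w assume w: "w \<in> {w\<in>T. strict le a w \<and> le w z}"
          have "w \<notin> A"
          proof
            assume "w \<in> A"
            then have "a = w" using ac[OF a(1)] w by (auto simp: strict_def)
            then show False using w by (simp add: strict_def)
          qed
          then show "w \<in> T - A" using w by blast
        qed
        show ?thesis using o i su by blast
      next
        case na: False
        obtain s where s: "s \<in> T" "strict le s z" using not_minimal[OF zT False] by blast
        have o: "openin (interval_topology T le) {w\<in>T. strict le s w \<and> le w z}" using open_ival[OF s(1) zT] .
        have i: "z \<in> {w\<in>T. strict le s w \<and> le w z}" using s zT tree_refl[OF tr zT] by simp
        have su: "{w\<in>T. strict le s w \<and> le w z} \<subseteq> T - A"
        proof
          fix w assume w: "w \<in> {w\<in>T. strict le s w \<and> le w z}"
          have "w \<notin> A"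
          proof
            assume wA: "w \<in> A"
            have "w \<noteq> z" using wA z by blast
            then have "strict le w z" using w by (simp add: strict_def)
            then show False using na wA by blast
          qed
          then show "w \<in> T - A" using w by blast
        qed
        show ?thesis using o i su by blast
      qed
    qed
  qed
  then show ?thesis unfolding closedin_def topspace_it[OF tr] using A by blast
qed

lemma m_exists:
  fixes F :: "nat \<Rightarrow> 'a set"
  assumes tr: "is_tree T le"
    and cl: "\<And>n. closedin (interval_topology T le) (F n)"
    and dec: "\<And>n m. n \<le> m \<Longrightarrow> F m \<subseteq> F n"
    and emp: "\<And>x. x \<in> T \<Longrightarrow> \<exists>n. x \<notin> F n"
    and x: "x \<in> T"
  shows "\<exists>n. \<forall>z\<in>T. le z x \<longrightarrow> z \<notin> F n"
proof (rule ccontr)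
  assume "\<not> (\<exists>n. \<forall>z\<in>T. le z x \<longrightarrow> z \<notin> F n)"
  then have allx: "\<forall>n. \<exists>w\<in>T. le w x \<and> w \<in> F n" by blast
  define S where "S = {z\<in>T. le z x \<and> (\<forall>n. \<exists>w\<in>T. le w z \<and> w \<in> F n)}"
  have xS: "x \<in> S" unfolding S_def using x allx tree_refl[OF tr x] by blast
  obtain c where cS: "c \<in> S" and cmin: "\<And>s. s \<in> S \<Longrightarrow> \<not> strict le s c"
  proof (cases "{s\<in>S. strict le s x} = {}")
    case True
    show ?thesis using that[OF xS] True by blast
  next
    case False
    have wo: "well_ordered_subset {s\<in>T. strict le s x} le" using tr x by (simp add: is_tree_def)
    have sub: "{s\<in>S. strict le s x} \<subseteq> {s\<in>T. strict le s x}" unfolding S_def by blast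
    have "\<forall>B. B \<subseteq> {s\<in>T. strict le s x} \<and> B \<noteq> {} \<longrightarrow> (\<exists>m\<in>B. \<forall>b\<in>B. le m b)"
      using wo by (simp add: well_ordered_subset_def)
    then obtain m0 where m0: "m0 \<in> {s\<in>S. strict le s x}" "\<forall>b\<in>{s\<in>S. strict le s x}. le m0 b"
      using sub False by meson
    have m0T: "m0 \<in> T" using m0(1) unfolding S_def by blast
    show ?thesis
    proof (rule that[of m0])
      show "m0 \<in> S" using m0 by blast
      fix s assume sS: "s \<in> S"
      show "\<not> strict le s m0"
      proof
        assume sm: "strict le s m0"
        have sT: "s \<in> T" using sS unfolding S_def by blast
        have "strict le s x" using strict_trans2[OF tr sT m0T x sm] m0(1) by (simp add: strict_def)
        then have "le m0 s" using m0(2) sS by blast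
        then have "s = m0" using tree_antisym[OF tr sT m0T] sm by (simp add: strict_def)
        then show False using sm by (simp add: strict_def)
      qed
    qed
  qed
  have cT: "c \<in> T" and cx: "le c x" and cw: "\<And>n. \<exists>w\<in>T. le w c \<and> w \<in> F n"
    using cS unfolding S_def by blast+
  obtain N where N: "c \<notin> F N" using emp[OF cT] by blast
  show False
  proof (cases "minimal_in T le c")
    case True
    obtain w where w: "w \<in> T" "le w c" "w \<in> F N" using cw by blast
    have "w = c" using True w unfolding minimal_in_def by blast
    then show False using w N by simp
  next
    case False
    have op: "openin (interval_topology T le) (T - F N)"
      using cl[of N] unfolding closedin_def topspace_it[OF tr] by blast
    obtain s where s: "s \<in> T" "strict le s c" "{w\<in>T. strict le s w \<and> le w c} \<subseteq> T - F N"
      using local_base[OF tr op _ False] cT N by blast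
    have "s \<in> S"
      unfolding S_def
    proof (intro CollectI conjI allI)
      show "s \<in> T" by (rule s(1))
      show "le s x" using tree_trans[OF tr s(1) cT x] s(2) cx by (simp add: strict_def)
      fix n
      obtain w where w: "w \<in> T" "le w c" "w \<in> F (max n N)" using cw by blast
      have wn: "w \<in> F n" using w(3) dec[OF max.cobounded1[of n N]] by blast
      have wN: "w \<in> F N" using w(3) dec[OF max.cobounded2[of N n]] by blast
      have wc: "strict le w c" using w(2) wN N by (auto simp: strict_def)
      have "\<not> strict le s w" using s(3) w(1) w(2) wN by blast
      moreover have "le s w \<or> le w s" using tree_chain[OF tr cT s(1) w(1) s(2) wc] .
      ultimately have "le w s" by (auto simp: strict_def)
      then show "\<exists>w\<in>T. le w s \<and> w \<in> F n" using w(1) wn by blast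
    qed
    then show False using cmin s(2) by blast
  qed
qed



lemma tree_cmeta:
  fixes F :: "nat \<Rightarrow> 'a set"
  assumes tr: "is_tree T le"
    and nor: "normal_space (interval_topology T le)"
    and cl: "\<And>n. closedin (interval_topology T le) (F n)"
    and dec: "\<And>n m. n \<le> m \<Longrightarrow> F m \<subseteq> F n"
    and emp: "\<And>x. x \<in> T \<Longrightarrow> \<exists>n. x \<notin> F n"
  shows "\<exists>G. (\<forall>n. openin (interval_topology T le) (G n)) \<and> (\<forall>n. F n \<subseteq> G n) \<and>
             (\<forall>x. \<exists>n. x \<notin> G n)"
proof -
  let ?X = "interval_topology T le"
  have topX: "topspace ?X = T" by (rule topspace_it[OF tr])
  define P where "P n x \<longleftrightarrow> (\<forall>z\<in>T. le z x \<longrightarrow> z \<notin> F n)" for n x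
  define m where "m x = (LEAST n. P n x)" for x
  have Pm: "P (m x) x" if x: "x \<in> T" for x
  proof -
    have "\<exists>n. P n x" unfolding P_def by (rule m_exists[OF tr cl dec emp x])
    then show ?thesis unfolding m_def by (rule LeastI_ex)
  qed
  have Pmono: "P n' x" if "P n x" "n \<le> n'" for n n' x
    using that dec[of n n'] unfolding P_def by blast
  have mle: "m x \<le> n" if "P n x" for n x
    unfolding m_def using that by (rule Least_le)
  have lt_iff: "n < m x \<longleftrightarrow> \<not> P n x" if x: "x \<in> T" for n x
  proof
    assume "n < m x"
    then show "\<not> P n x" using mle[of n x] by linarith
  next
    assume np: "\<not> P n x"
    show "n < m x"
    proof (rule ccontr)
      assume "\<not> n < m x"
      then have "m x \<le> n" by simp
      then have "P n x" using Pmono[OF Pm[OF x]] by blast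
      then show False using np by blast
    qed
  qed
  have mono_m: "m z \<le> m x" if x: "x \<in> T" and z: "z \<in> T" and zx: "le z x" for x z
  proof -
    have "P (m x) z" using Pm[OF x] tree_trans[OF tr _ z x _ zx] unfolding P_def by blast
    then show ?thesis by (rule mle)
  qed
  have clT: "F n \<subseteq> T" for n using closedin_subset[OF cl[of n]] topX by simp
  have Fup: "n < m y" if y: "y \<in> F n" for n y
  proof -
    have yT: "y \<in> T" using y clT by blast
    have "\<not> P n y" unfolding P_def using y yT tree_refl[OF tr yT] by blast
    then show ?thesis using lt_iff[OF yT] by blast
  qed
  define Up where "Up n = {x\<in>T. n < m x}" for n
  have Up_closed: "closedin ?X (Up n)" for n
  proof -
    have "openin ?X {x\<in>T. m x \<le> n}"
    proof (rule down_open[OF tr])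
      show "{x\<in>T. m x \<le> n} \<subseteq> T" by blast
      fix x z assume "x \<in> {x\<in>T. m x \<le> n}" "z \<in> T" "le z x"
      then show "z \<in> {x\<in>T. m x \<le> n}" using mono_m[of x z] by auto
    qed
    moreover have "topspace ?X - Up n = {x\<in>T. m x \<le> n}" unfolding topX Up_def by auto
    moreover have "Up n \<subseteq> topspace ?X" unfolding topX Up_def by blast
    ultimately show ?thesis unfolding closedin_def by simp
  qed
  define N where "N j = {x\<in>T. m x = j \<and> (\<forall>z\<in>T. strict le z x \<longrightarrow> m z < j)}" for j
  have N_closed: "closedin ?X (N j)" for j
  proof (rule antichain_closed[OF tr])
    show "N j \<subseteq> T" unfolding N_def by blast
    fix a b assume a: "a \<in> N j" and b: "b \<in> N j" and ab: "le a b"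
    show "a = b"
    proof (rule ccontr)
      assume "a \<noteq> b"
      then have "strict le a b" using ab by (simp add: strict_def)
      then have "m a < j" using a b unfolding N_def by blast
      then show False using a unfolding N_def by simp
    qed
  qed
  have NUp: "disjnt (N j) (Up j)" for j unfolding N_def Up_def disjnt_def by auto
  have "\<forall>j. \<exists>UV. openin ?X (fst UV) \<and> openin ?X (snd UV) \<and> N j \<subseteq> fst UV \<and> Up j \<subseteq> snd UV \<and> disjnt (fst UV) (snd UV)"
  proof
    fix j
    obtain U V where "openin ?X U" "openin ?X V" "N j \<subseteq> U" "Up j \<subseteq> V" "disjnt U V"
      using nor N_closed[of j] Up_closed[of j] NUp[of j] unfolding normal_space_def by metis
    then show "\<exists>UV. openin ?X (fst UV) \<and> openin ?X (snd UV) \<and> N j \<subseteq> fst UV \<and> Up j \<subseteq> snd UV \<and> disjnt (fst UV) (snd UV)"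
      by (intro exI[of _ "(U, V)"]) simp
  qed
  then obtain UV where UV: "\<And>j. openin ?X (fst (UV j)) \<and> openin ?X (snd (UV j)) \<and> N j \<subseteq> fst (UV j) \<and> Up j \<subseteq> snd (UV j) \<and> disjnt (fst (UV j)) (snd (UV j))"
    by metis
  define U where "U j = fst (UV j)" for j
  define V where "V j = snd (UV j)" for j
  have Uo: "openin ?X (U j)" and Vo: "openin ?X (V j)" and NU: "N j \<subseteq> U j" and UpV: "Up j \<subseteq> V j"
    and UVd: "disjnt (U j) (V j)" for j using UV[of j] unfolding U_def V_def by auto
  define Q where "Q j = U j \<inter> \<Inter>(V ` {..<j})" for j
  have Oo: "openin ?X (Q j)" for j
    unfolding Q_def by (rule openin_Int_Inter) (use Uo Vo in auto)
  have NQ: "N j \<subseteq> Q j" for j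
  proof
    fix x assume x: "x \<in> N j"
    have "x \<in> U j" using x NU by blast
    moreover have "x \<in> V i" if "i < j" for i
    proof -
      have "x \<in> Up i" using x that unfolding N_def Up_def by auto
      then show ?thesis using UpV by blast
    qed
    ultimately show "x \<in> Q j" unfolding Q_def by blast
  qed
  have Qdisj: "Q i \<inter> Q j = {}" if "i < j" for i j
  proof -
    have "Q i \<subseteq> U i" unfolding Q_def by blast
    moreover have "Q j \<subseteq> V i" unfolding Q_def using that by blast
    ultimately show ?thesis using UVd[of i] unfolding disjnt_def by blast
  qed
  have QT: "Q j \<subseteq> T" for j using openin_subset[OF Oo[of j]] topX by simp
  define G where "G n = Up n \<union> \<Union>(Q ` {j. n < j})" for n
  have Go: "openin ?X (G n)" for n
  proof (subst openin_subopen, intro ballI)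
    fix y assume y: "y \<in> G n"
    show "\<exists>W. openin ?X W \<and> y \<in> W \<and> W \<subseteq> G n"
    proof (cases "y \<in> Up n")
      case False
      then obtain j where "n < j" "y \<in> Q j" using y unfolding G_def by blast
      moreover have "Q j \<subseteq> G n" using \<open>n < j\<close> unfolding G_def by blast
      ultimately show ?thesis using Oo[of j] by blast
    next
      case yU: True
      have yT: "y \<in> T" using yU unfolding Up_def by blast
      show ?thesis
      proof (cases "\<exists>z\<in>T. strict le z y \<and> n < m z")
        case True
        then obtain z where z: "z \<in> T" "strict le z y" "n < m z" by blast
        have o: "openin ?X {w\<in>T. strict le z w \<and> le w y}" by (rule open_ival[OF z(1) yT])
        have i: "y \<in> {w\<in>T. strict le z w \<and> le w y}" using z yT tree_refl[OF tr yT] by simp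
        have su: "{w\<in>T. strict le z w \<and> le w y} \<subseteq> G n"
        proof
          fix w assume w: "w \<in> {w\<in>T. strict le z w \<and> le w y}"
          have "m z \<le> m w" using mono_m[of w z] w z by (simp add: strict_def)
          then have "w \<in> Up n" using w z(3) unfolding Up_def by simp
          then show "w \<in> G n" unfolding G_def by blast
        qed
        show ?thesis using o i su by blast
      next
        case False
        have "y \<in> N (m y)" unfolding N_def
        proof (intro CollectI conjI ballI impI)
          show "y \<in> T" by (rule yT)
          show "m y = m y" by simp
          fix z assume "z \<in> T" "strict le z y"
          then have "m z \<le> n" using False by auto
          moreover have "n < m y" using yU unfolding Up_def by simp
          ultimately show "m z < m y" by simp
        qed
        then have "y \<in> Q (m y)" using NQ by blast
        moreover have "n < m y" using yU unfolding Up_def by simp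
        moreover have "Q (m y) \<subseteq> G n" using \<open>n < m y\<close> unfolding G_def by blast
        ultimately show ?thesis using Oo[of "m y"] by blast
      qed
    qed
  qed
  have FG: "F n \<subseteq> G n" for n
  proof
    fix y assume "y \<in> F n"
    then have "y \<in> Up n" unfolding Up_def using Fup clT by blast
    then show "y \<in> G n" unfolding G_def by blast
  qed
  have Gemp: "\<exists>n. y \<notin> G n" for y
  proof (rule ccontr)
    assume "\<not> (\<exists>n. y \<notin> G n)"
    then have all: "\<And>n. y \<in> G n" by blast
    have "y \<notin> Up (m y)" unfolding Up_def by simp
    then obtain j where j: "m y < j" "y \<in> Q j" using all[of "m y"] unfolding G_def by blast
    have "y \<notin> Up j" using j(1) unfolding Up_def by simp
    then obtain j' where j': "j < j'" "y \<in> Q j'" using all[of j] unfolding G_def by blast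
    show False using Qdisj[OF j'(1)] j(2) j'(2) by blast
  qed
  show ?thesis using Go FG Gemp by blast
qed



theorem corollary4p21:
  fixes T :: "'a set" and le :: "'a \<Rightarrow> 'a \<Rightarrow> bool"
  assumes "is_tree T le"
    and "pseudo_sups_are_sups T le"
    and "normal_space (interval_topology T le)"
  shows "countably_paracompact (interval_topology T le)"
  unfolding countably_paracompact_def
proof (intro allI impI)
  let ?X = "interval_topology T le"
  have tr: "is_tree T le" and nor: "normal_space ?X" using assms by auto
  have topX: "topspace ?X = T" by (rule topspace_it[OF tr])
  fix \<U> assume A: "countable \<U> \<and> (\<forall>U\<in>\<U>. openin ?X U) \<and> \<Union>\<U> = topspace ?X"
  then have cU: "countable \<U>" and oU: "\<And>U. U \<in> \<U> \<Longrightarrow> openin ?X U" and uU: "\<Union>\<U> = T"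
    using topX by auto
  show "\<exists>\<V>. (\<forall>V\<in>\<V>. openin ?X V) \<and> \<Union>\<V> = topspace ?X \<and>
             (\<forall>V\<in>\<V>. \<exists>U\<in>\<U>. V \<subseteq> U) \<and> locally_finite_in ?X \<V>"
  proof (cases "\<U> = {}")
    case True
    then have "T = {}" using uU by simp
    then show ?thesis using topX unfolding locally_finite_in_def by (intro exI[of _ "{}"]) auto
  next
    case ne: False
    define Uf where "Uf = from_nat_into \<U>"
    have rU: "range Uf = \<U>" unfolding Uf_def using ne cU by simp
    have Ufo: "openin ?X (Uf i)" for i using oU rU by blast
    have UfT: "Uf i \<subseteq> T" for i using openin_subset[OF Ufo[of i]] topX by simp
    define W where "W n = \<Union>(Uf ` {..n})" for n
    have Wo: "openin ?X (W n)" for n unfolding W_def by (rule openin_Union) (use Ufo in blast)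
    define F where "F n = T - W n" for n
    have Fc: "closedin ?X (F n)" for n
      unfolding F_def using closedin_diff[OF closedin_topspace Wo[of n]] topX by simp
    have Fdec: "F m \<subseteq> F n" if "n \<le> m" for n m
      unfolding F_def W_def using that by auto
    have Femp: "\<exists>n. x \<notin> F n" if x: "x \<in> T" for x
    proof -
      obtain i where "x \<in> Uf i" using x uU rU by blast
      then have "x \<in> W i" unfolding W_def by blast
      then show ?thesis unfolding F_def by blast
    qed
    obtain G where Go: "\<And>n. openin ?X (G n)" and FG: "\<And>n. F n \<subseteq> G n" and Gemp: "\<And>x. \<exists>n. x \<notin> G n"
      using tree_cmeta[OF tr nor Fc Fdec Femp] by blast
    have NA: "\<And>S U. closedin ?X S \<Longrightarrow> openin ?X U \<Longrightarrow> S \<subseteq> U \<Longrightarrow>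
        \<exists>V. openin ?X V \<and> S \<subseteq> V \<and> ?X closure_of V \<subseteq> U"
      using nor unfolding normal_space_alt by blast
    have "\<forall>n. \<exists>H. openin ?X H \<and> F n \<subseteq> H \<and> ?X closure_of H \<subseteq> G n"
      using NA[OF Fc Go FG] by blast
    then obtain H where H: "\<forall>n. openin ?X (H n) \<and> F n \<subseteq> H n \<and> ?X closure_of (H n) \<subseteq> G n"
      using choice[of "\<lambda>n H. openin ?X H \<and> F n \<subseteq> H \<and> ?X closure_of H \<subseteq> G n"] by blast
    have Ho: "\<And>n. openin ?X (H n)" and FH: "\<And>n. F n \<subseteq> H n"
      and HG: "\<And>n. ?X closure_of (H n) \<subseteq> G n" using H by auto
    define K where "K n = \<Inter>(H ` {..n})" for n
    have Ko: "openin ?X (K n)" for n unfolding K_def by (rule openin_INT2) (use Ho in auto)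
    have KH: "K n \<subseteq> H n" for n unfolding K_def by blast
    have Kdec: "K m \<subseteq> K n" if "n \<le> m" for n m unfolding K_def using that by auto
    have KT: "K n \<subseteq> T" for n using openin_subset[OF Ko[of n]] topX by simp
    have FK: "F n \<subseteq> K n" for n
    proof -
      have "F n \<subseteq> H i" if "i \<le> n" for i using Fdec[OF that] FH[of i] by blast
      then show ?thesis unfolding K_def by blast
    qed
    have KG: "?X closure_of (K n) \<subseteq> G n" for n
      using closure_of_mono[OF KH[of n]] HG[of n] by blast
    define Kp where "Kp n = (if n = 0 then T else K (n - 1))" for n
    have Kpo: "openin ?X (Kp n)" for n
      unfolding Kp_def using Ko openin_topspace[of ?X] topX by auto
    define Vf where "Vf n = Uf n \<inter> Kp n" for n
    have Vfo: "openin ?X (Vf n)" for n unfolding Vf_def using Ufo Kpo by blast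
    have VfT: "Vf n \<subseteq> T" for n unfolding Vf_def using UfT by blast
    have cover: "\<Union>(range Vf) = T"
    proof
      show "\<Union>(range Vf) \<subseteq> T" using VfT by blast
      show "T \<subseteq> \<Union>(range Vf)"
      proof
        fix x assume x: "x \<in> T"
        obtain N where N: "x \<notin> G N" using Gemp by blast
        have "K N \<subseteq> ?X closure_of (K N)" by (rule closure_of_subset) (simp add: KT topX)
        then have "x \<notin> K N" using N KG[of N] by blast
        then have ex: "\<exists>k. x \<notin> Kp k" unfolding Kp_def by (intro exI[of _ "Suc N"]) simp
        define N' where "N' = (LEAST k. x \<notin> Kp k)"
        have N'1: "x \<notin> Kp N'" unfolding N'_def by (rule LeastI_ex[OF ex])
        have N'2: "x \<in> Kp k" if "k < N'" for k
          using not_less_Least[of k "\<lambda>k. x \<notin> Kp k"] that unfolding N'_def by blast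
        have N'0: "N' \<noteq> 0"
        proof
          assume "N' = 0"
          then show False using N'1 x unfolding Kp_def by simp
        qed
        then have "x \<notin> K (N' - 1)" using N'1 unfolding Kp_def by simp
        then have "x \<notin> F (N' - 1)" using FK by blast
        then have "x \<in> W (N' - 1)" unfolding F_def using x by blast
        then obtain i where i: "i \<le> N' - 1" "x \<in> Uf i" unfolding W_def by blast
        have "i < N'" using i(1) N'0 by simp
        then have "x \<in> Kp i" by (rule N'2)
        then have "x \<in> Vf i" using i(2) unfolding Vf_def by blast
        then show "x \<in> \<Union>(range Vf)" by blast
      qed
    qed
    have lf: "locally_finite_in ?X (range Vf)"
      unfolding locally_finite_in_def
    proof (intro conjI ballI)
      show "\<Union>(range Vf) \<subseteq> topspace ?X" using cover topX by simp
      fix x assume x: "x \<in> topspace ?X"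
      obtain N where N: "x \<notin> G N" using Gemp by blast
      define Ob where "Ob = topspace ?X - ?X closure_of (K N)"
      have Obo: "openin ?X Ob" unfolding Ob_def
        by (rule openin_diff[OF openin_topspace closedin_closure_of])
      have xOb: "x \<in> Ob" unfolding Ob_def using x N KG[of N] by blast
      have "{V \<in> range Vf. V \<inter> Ob \<noteq> {}} \<subseteq> Vf ` {..N}"
      proof
        fix V assume V: "V \<in> {V \<in> range Vf. V \<inter> Ob \<noteq> {}}"
        then obtain n where n: "V = Vf n" by blast
        have "n \<le> N"
        proof (rule ccontr)
          assume "\<not> n \<le> N"
          then have nN: "N \<le> n - 1" "n \<noteq> 0" by auto
          have "Vf n \<subseteq> K (n - 1)" unfolding Vf_def Kp_def using nN by simp
          also have "\<dots> \<subseteq> K N" by (rule Kdec[OF nN(1)])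
          also have "\<dots> \<subseteq> ?X closure_of (K N)"
            by (rule closure_of_subset) (use KT topX in simp)
          finally have "Vf n \<inter> Ob = {}" unfolding Ob_def by blast
          then show False using V n by blast
        qed
        then show "V \<in> Vf ` {..N}" using n by blast
      qed
      then have "finite {V \<in> range Vf. V \<inter> Ob \<noteq> {}}" by (rule finite_subset) simp
      then show "\<exists>V. openin ?X V \<and> x \<in> V \<and> finite {U \<in> range Vf. U \<inter> V \<noteq> {}}"
        using Obo xOb by blast
    qed
    show ?thesis
    proof (intro exI[of _ "range Vf"] conjI)
      show "\<forall>V\<in>range Vf. openin ?X V" using Vfo by blast
      show "\<Union>(range Vf) = topspace ?X" using cover topX by simp
      show "\<forall>V\<in>range Vf. \<exists>U\<in>\<U>. V \<subseteq> U" unfolding Vf_def using rU by blast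
      show "locally_finite_in ?X (range Vf)" by (rule lf)
    qed
  qed
qed

end
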